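(* Let $\alpha>0$, $\eta=\alpha/(L+\alpha)$. Consider AggGCG (primal) with $y_0\in\mathrm{dom}\, h$, $s_0\in\mathbb{R}^n$: for $k\ge0$, $x_{k+1}=\mathrm{argmin}_x\{\langle s_k,x\rangle+h^\alpha(x)\}$, $y_{k+1}=(1-\eta)y_k+\eta x_{k+1}$, $s_{k+1}=(1-\eta)s_k+\eta\nabla f(y_k)$. Consider AggGCG (dual) with $z_0\in\mathrm{dom}\, f^*$, $v_0\in\mathbb{R}^n$: for $k\ge0$, $\bar z_{k+1}=\mathrm{argmin}_z\{-\langle v_k,z\rangle+f^*(z)\}$, $z_{k+1}=(1-\eta)z_k+\eta\bar z_{k+1}$, $v_{k+1}=(1-\eta)v_k+\eta\nabla(h^\alpha)^*(-z_k)$. If $s_0=z_0$ and $v_0=y_0$, then for every $k\ge0$: $y_k=v_k$, $s_k=z_k$, $x_{k+1}=\nabla(h^\alpha)^*(-z_k)$, and $\nabla f(y_k)=\bar z_{k+1}$.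
   Context: Let $\|\cdot\|$ be a norm on $\mathbb{R}^n$ with dual norm $\|\cdot\|_*$. Let $f:\mathbb{R}^n\to\mathbb{R}$ be convex, differentiable and $L$-smooth ($L>0$) with respect to $\|\cdot\|$, $h:\mathbb{R}^n\to(-\infty,\infty]$ closed proper convex with bounded domain, and $w:\mathbb{R}^n\to[0,+\infty]$ closed, $1$-strongly convex with respect to $\|\cdot\|$ on $\mathrm{dom}\, h$, with $\max_{\mathrm{dom}\, h}w<\infty$. Let $h^\alpha=h+\alpha w$; $^*$ denotes convex conjugate ($(h^\alpha)^*$ is differentiable, $f^*$ is $(1/L)$-strongly convex w.r.t. $\|\cdot\|_*$). *)

theory Defs
  imports "HOL-Analysis.Analysis" "HOL-Library.Extended_Real"
begin

definition is_norm :: "('a::real_vector \<Rightarrow> real) \<Rightarrow> bool" where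
  "is_norm N \<longleftrightarrow> (\<forall>x. 0 \<le> N x) \<and> (\<forall>x. N x = 0 \<longleftrightarrow> x = 0)
     \<and> (\<forall>c x. N (c *\<^sub>R x) = \<bar>c\<bar> * N x) \<and> (\<forall>x y. N (x + y) \<le> N x + N y)"

definition dual_norm :: "('a::real_inner \<Rightarrow> real) \<Rightarrow> 'a \<Rightarrow> real" where
  "dual_norm N y = Sup {y \<bullet> x | x. N x \<le> 1}"

definition grad :: "('a::real_inner \<Rightarrow> real) \<Rightarrow> 'a \<Rightarrow> 'a" where
  "grad F x = (SOME g. (F has_derivative (\<lambda>d. g \<bullet> d)) (at x))"

definition L_smooth :: "('a::real_inner \<Rightarrow> real) \<Rightarrow> real \<Rightarrow> ('a \<Rightarrow> real) \<Rightarrow> bool" where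
  "L_smooth N L F \<longleftrightarrow> (\<forall>x. F differentiable at x) \<and>
     (\<forall>x y. dual_norm N (grad F x - grad F y) \<le> L * N (x - y))"

definition edom :: "('a \<Rightarrow> ereal) \<Rightarrow> 'a set" where
  "edom F = {x. F x < \<infinity>}"

definition eproper :: "('a \<Rightarrow> ereal) \<Rightarrow> bool" where
  "eproper F \<longleftrightarrow> (\<forall>x. F x \<noteq> -\<infinity>) \<and> (\<exists>x. F x \<noteq> \<infinity>)"

definition econvex :: "('a::real_vector \<Rightarrow> ereal) \<Rightarrow> bool" where
  "econvex F \<longleftrightarrow> (\<forall>x y t. 0 < t \<and> t < 1 \<longrightarrow>
     F (t *\<^sub>R x + (1 - t) *\<^sub>R y) \<le> ereal t * F x + ereal (1 - t) * F y)"

text \<open>Closed = lower semicontinuous = closed epigraph.\<close>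
definition eclosed :: "('a::topological_space \<Rightarrow> ereal) \<Rightarrow> bool" where
  "eclosed F \<longleftrightarrow> closed {(x, t::real). F x \<le> ereal t}"

definition strongly_convex_on_wrt ::
  "('a::real_vector \<Rightarrow> real) \<Rightarrow> 'a set \<Rightarrow> ('a \<Rightarrow> ereal) \<Rightarrow> bool" where
  "strongly_convex_on_wrt N S F \<longleftrightarrow> (\<forall>x\<in>S. \<forall>y\<in>S. \<forall>t. 0 < t \<and> t < 1 \<longrightarrow>
     F (t *\<^sub>R x + (1 - t) *\<^sub>R y) \<le>
       ereal t * F x + ereal (1 - t) * F y - ereal (t * (1 - t) / 2 * (N (x - y))\<^sup>2))"

definition fconj :: "('a::real_inner \<Rightarrow> ereal) \<Rightarrow> 'a \<Rightarrow> ereal" where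
  "fconj F y = (SUP x. ereal (y \<bullet> x) - F x)"

definition is_argmin :: "('a \<Rightarrow> ereal) \<Rightarrow> 'a \<Rightarrow> bool" where
  "is_argmin F x \<longleftrightarrow> F x < \<infinity> \<and> (\<forall>u. F x \<le> F u)"

definition halpha :: "('a \<Rightarrow> ereal) \<Rightarrow> ('a \<Rightarrow> ereal) \<Rightarrow> real \<Rightarrow> 'a \<Rightarrow> ereal" where
  "halpha h w \<alpha> x = h x + ereal \<alpha> * w x"

end

theory Submission
  imports Defs
begin


lemma grad_eqI:
  fixes F :: "'a::real_inner \<Rightarrow> real"
  assumes "(F has_derivative (\<lambda>d. g \<bullet> d)) (at x)"
  shows "grad F x = g"
proof -
  let ?g = "grad F x"
  have "(F has_derivative (\<lambda>d. ?g \<bullet> d)) (at x)"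
    unfolding grad_def by (rule someI[of _ g]) (rule assms)
  then have "(\<lambda>d. ?g \<bullet> d) = (\<lambda>d. g \<bullet> d)"
    using assms has_derivative_unique by blast
  then have "?g \<bullet> (?g - g) = g \<bullet> (?g - g)" by metis
  then have "(?g - g) \<bullet> (?g - g) = 0" by (simp add: inner_diff_left)
  then show ?thesis by simp
qed

lemma norm_lower:
  fixes N :: "'a::euclidean_space \<Rightarrow> real"
  assumes "is_norm N"
  shows "\<exists>c>0. \<forall>v. c * norm v \<le> N v"
proof -
  have N0: "\<And>x. 0 \<le> N x" and Nz: "\<And>x. N x = 0 \<longleftrightarrow> x = 0"
    and Ns: "\<And>c x. N (c *\<^sub>R x) = \<bar>c\<bar> * N x" and Nt: "\<And>x y. N (x + y) \<le> N x + N y"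
    using assms unfolding is_norm_def by auto
  have Nsum: "N (\<Sum>b\<in>B. f b) \<le> (\<Sum>b\<in>B. N (f b))" if "finite B" for B and f :: "'a \<Rightarrow> 'a"
    using that
  proof (induction B rule: finite_induct)
    case empty then show ?case using Nz[of 0] by simp
  next
    case (insert b B)
    then show ?case using Nt[of "f b" "\<Sum>b\<in>B. f b"] by simp
  qed
  define M where "M = (\<Sum>b\<in>Basis. N b)"
  have M: "N x \<le> M * norm x" for x
  proof -
    have "N x = N (\<Sum>b\<in>Basis. (x \<bullet> b) *\<^sub>R b)" by (simp add: euclidean_representation)
    also have "\<dots> \<le> (\<Sum>b\<in>Basis. N ((x \<bullet> b) *\<^sub>R b))" by (rule Nsum) simp
    also have "\<dots> = (\<Sum>b\<in>Basis. \<bar>x \<bullet> b\<bar> * N b)" by (simp add: Ns)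
    also have "\<dots> \<le> (\<Sum>b\<in>Basis. norm x * N b)"
      by (rule sum_mono) (simp add: N0 Basis_le_norm mult_right_mono)
    also have "\<dots> = M * norm x" by (simp add: M_def sum_distrib_left mult.commute)
    finally show ?thesis .
  qed
  have Nneg: "N (- x) = N x" for x using Ns[of "-1" x] by simp
  have Ndiff: "\<bar>N x - N y\<bar> \<le> M * norm (x - y)" for x y
  proof -
    have "N x \<le> N (x - y) + N y" using Nt[of "x - y" y] by simp
    moreover have "N y \<le> N (y - x) + N x" using Nt[of "y - x" x] by simp
    moreover have "N (y - x) = N (x - y)" using Nneg[of "x - y"] by simp
    ultimately have "\<bar>N x - N y\<bar> \<le> N (x - y)" by linarith
    then show ?thesis using M[of "x - y"] by linarith
  qed
  have Mpos: "M \<ge> 0" unfolding M_def by (simp add: N0 sum_nonneg)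
  have cont: "continuous_on (sphere 0 1) N"
    unfolding continuous_on_iff
  proof (intro ballI allI impI)
    fix x e assume "x \<in> sphere (0::'a) 1" "(0::real) < e"
    show "\<exists>d>0. \<forall>x'\<in>sphere 0 1. dist x' x < d \<longrightarrow> dist (N x') (N x) < e"
    proof (intro exI[of _ "e / (M + 1)"] conjI ballI impI)
      show "0 < e / (M + 1)" using \<open>0 < e\<close> Mpos by simp
    next
      fix x' assume "dist x' x < e / (M + 1)"
      then have "(M + 1) * norm (x' - x) < e" using Mpos by (simp add: dist_norm field_simps)
      moreover have "dist (N x') (N x) \<le> M * norm (x' - x)" using Ndiff by (simp add: dist_real_def)
      moreover have "M * norm (x' - x) \<le> (M + 1) * norm (x' - x)" by (simp add: mult_right_mono)
      ultimately show "dist (N x') (N x) < e" by linarith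
    qed
  qed
  obtain b :: 'a where b: "b \<in> Basis" using nonempty_Basis by blast
  then have "b \<in> sphere 0 1" by simp
  then have ne: "sphere (0::'a) 1 \<noteq> {}" by blast
  obtain x0 where x0: "x0 \<in> sphere 0 1" and mn: "\<forall>y\<in>sphere 0 1. N x0 \<le> N y"
    using continuous_attains_inf[OF compact_sphere ne cont] by blast
  have cpos: "N x0 > 0" using x0 Nz N0 by (metis dist_0_norm less_eq_real_def mem_sphere norm_zero zero_neq_one)
  show ?thesis
  proof (intro exI[of _ "N x0"] conjI allI)
    show "0 < N x0" by (rule cpos)
  next
    fix v :: 'a
    show "N x0 * norm v \<le> N v"
    proof (cases "v = 0")
      case True then show ?thesis using N0 by simp
    next
      case False
      then have "(1 / norm v) *\<^sub>R v \<in> sphere 0 1" by simp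
      then have "N x0 \<le> N ((1 / norm v) *\<^sub>R v)" using mn by blast
      also have "\<dots> = N v / norm v" by (simp add: Ns)
      finally show ?thesis using False by (simp add: field_simps)
    qed
  qed
qed

lemma conj_has_derivative:
  fixes \<phi> :: "'a::euclidean_space \<Rightarrow> ereal" and \<Phi> :: "'a \<Rightarrow> real"
  assumes fin: "\<And>u. \<phi> u < \<infinity> \<Longrightarrow> \<phi> u = ereal (\<Phi> u)"
    and x0: "\<phi> x0 < \<infinity>" and K: "K > 0"
    and grow: "\<And>u. \<phi> u < \<infinity> \<Longrightarrow> y0 \<bullet> u - \<Phi> u + K * (norm (u - x0))\<^sup>2 \<le> y0 \<bullet> x0 - \<Phi> x0"
  shows "((\<lambda>p. real_of_ereal (fconj \<phi> p)) has_derivative (\<lambda>d. x0 \<bullet> d)) (at y0)"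
proof -
  define g0 where "g0 = y0 \<bullet> x0 - \<Phi> x0"
  define B where "B p = g0 + (p - y0) \<bullet> x0 + (norm (p - y0))\<^sup>2 / (4 * K)" for p
  have up: "fconj \<phi> p \<le> ereal (B p)" for p
    unfolding fconj_def
  proof (rule SUP_least)
    fix u assume "u \<in> (UNIV :: 'a set)"
    show "ereal (p \<bullet> u) - \<phi> u \<le> ereal (B p)"
    proof (cases "\<phi> u < \<infinity>")
      case False then have "\<phi> u = \<infinity>" by (simp add: top.not_eq_extremum)
      then show ?thesis by simp
    next
      case True
      define r where "r = norm (u - x0)"
      define \<delta> where "\<delta> = norm (p - y0)"
      have g: "y0 \<bullet> u - \<Phi> u \<le> g0 - K * r\<^sup>2" using grow[OF True] unfolding g0_def r_def by simp
      have cs: "(p - y0) \<bullet> (u - x0) \<le> \<delta> * r" unfolding \<delta>_def r_def by (rule norm_cauchy_schwarz)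
      have sq: "\<delta> * r - K * r\<^sup>2 \<le> \<delta>\<^sup>2 / (4 * K)"
      proof -
        have "0 \<le> (\<delta> - 2 * K * r)\<^sup>2" by simp
        then have "4 * K * (\<delta> * r - K * r\<^sup>2) \<le> \<delta>\<^sup>2" by (simp add: power2_eq_square algebra_simps)
        then show ?thesis using K by (simp add: field_simps)
      qed
      have "p \<bullet> u - \<Phi> u = (y0 \<bullet> u - \<Phi> u) + (p - y0) \<bullet> x0 + (p - y0) \<bullet> (u - x0)"
        by (simp add: inner_diff_left inner_diff_right inner_commute)
      also have "\<dots> \<le> B p" using g cs sq unfolding B_def \<delta>_def by linarith
      finally show ?thesis using fin[OF True] by simp
    qed
  qed
  have lo: "ereal (p \<bullet> x0 - \<Phi> x0) \<le> fconj \<phi> p" for p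
    unfolding fconj_def using fin[OF x0] by (intro SUP_upper2[of x0]) auto
  have val: "fconj \<phi> p = ereal (real_of_ereal (fconj \<phi> p))" for p
    using up[of p] lo[of p] by (cases "fconj \<phi> p") auto
  define g where "g p = real_of_ereal (fconj \<phi> p)" for p
  have lo': "p \<bullet> x0 - \<Phi> x0 \<le> g p" and up': "g p \<le> B p" for p
    using lo[of p] up[of p] val[of p] unfolding g_def by (metis ereal_less_eq(3))+
  have gy0: "g y0 = g0" using lo'[of y0] up'[of y0] unfolding B_def g0_def by simp
  have bnd: "\<bar>g p - g y0 - x0 \<bullet> (p - y0)\<bar> \<le> (norm (p - y0))\<^sup>2 / (4 * K)" for p
  proof -
    have "p \<bullet> x0 - \<Phi> x0 = g0 + x0 \<bullet> (p - y0)" unfolding g0_def by (simp add: inner_diff_right inner_commute)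
    moreover have "B p = g0 + x0 \<bullet> (p - y0) + (norm (p - y0))\<^sup>2 / (4 * K)" unfolding B_def by (simp add: inner_commute)
    moreover have "0 \<le> (norm (p - y0))\<^sup>2 / (4 * K)" using K by simp
    ultimately show ?thesis using lo'[of p] up'[of p] gy0 by linarith
  qed
  show ?thesis
    unfolding g_def[symmetric] has_derivative_at'
  proof (intro conjI allI impI)
    show "bounded_linear ((\<bullet>) x0)" by (rule bounded_linear_inner_right)
  next
    fix e :: real assume "e > 0"
    show "\<exists>d>0. \<forall>x'. 0 < norm (x' - y0) \<and> norm (x' - y0) < d \<longrightarrow>
             norm (g x' - g y0 - x0 \<bullet> (x' - y0)) / norm (x' - y0) < e"
    proof (intro exI[of _ "4 * K * e"] conjI allI impI)
      show "0 < 4 * K * e" using K \<open>e > 0\<close> by simp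
    next
      fix x' assume a: "0 < norm (x' - y0) \<and> norm (x' - y0) < 4 * K * e"
      have "norm (g x' - g y0 - x0 \<bullet> (x' - y0)) / norm (x' - y0) \<le> ((norm (x' - y0))\<^sup>2 / (4 * K)) / norm (x' - y0)"
        using bnd[of x'] a by (intro divide_right_mono) auto
      also have "\<dots> = norm (x' - y0) / (4 * K)" using a by (simp add: power2_eq_square)
      also have "\<dots> < e" using a K by (simp add: field_simps)
      finally show "norm (g x' - g y0 - x0 \<bullet> (x' - y0)) / norm (x' - y0) < e" .
    qed
  qed
qed

lemma grad_f_argmax:
  fixes f :: "'a::euclidean_space \<Rightarrow> real"
  assumes cvx: "convex_on UNIV f" and dif: "f differentiable at y"
    and am: "is_argmin (\<lambda>u. ereal (- (y \<bullet> u)) + fconj (\<lambda>u. ereal (f u)) u) zb"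
  shows "grad f y = zb"
proof -
  let ?F = "fconj (\<lambda>u. ereal (f u))"
  obtain D where D: "(f has_derivative D) (at y)" using dif unfolding differentiable_def by blast
  have lin: "linear D" using D has_derivative_bounded_linear bounded_linear.linear by blast
  define G where "G = (\<Sum>b\<in>Basis. D b *\<^sub>R b)"
  have DG: "D d = G \<bullet> d" for d
  proof -
    have "D d = D (\<Sum>b\<in>Basis. (d \<bullet> b) *\<^sub>R b)" by (simp add: euclidean_representation)
    also have "\<dots> = (\<Sum>b\<in>Basis. (d \<bullet> b) * D b)" by (simp add: linear_sum[OF lin] linear_scale[OF lin])
    also have "\<dots> = G \<bullet> d" unfolding G_def by (simp add: inner_sum_right inner_commute mult.commute)
    finally show ?thesis .
  qed
  have tangent: "f x \<ge> f y + G \<bullet> (x - y)" for x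
  proof -
    define q where "q t = f (y + t *\<^sub>R (x - y))" for t :: real
    have qc: "convex_on UNIV q"
    proof (rule convex_onI)
      fix t a b :: real assume "0 < t" "t < 1"
      have "y + ((1 - t) * a + t * b) *\<^sub>R (x - y) = (1 - t) *\<^sub>R (y + a *\<^sub>R (x - y)) + t *\<^sub>R (y + b *\<^sub>R (x - y))"
        by (simp add: algebra_simps)
      then show "q ((1 - t) *\<^sub>R a + t *\<^sub>R b) \<le> (1 - t) * q a + t * q b"
        unfolding q_def using convex_onD[OF cvx, of t] \<open>0 < t\<close> \<open>t < 1\<close> by simp
    qed simp
    have "((\<lambda>t. y + t *\<^sub>R (x - y)) has_derivative (\<lambda>t. t *\<^sub>R (x - y))) (at 0)"
      by (auto intro!: derivative_eq_intros)
    then have "((\<lambda>t. f (y + t *\<^sub>R (x - y))) has_derivative (\<lambda>t. D (t *\<^sub>R (x - y)))) (at 0)"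
      using has_derivative_compose[of "\<lambda>t. y + t *\<^sub>R (x - y)" _ 0 UNIV f D] D by simp
    then have "(q has_field_derivative D (x - y)) (at 0)"
      unfolding q_def has_field_derivative_def by (simp add: linear_scale[OF lin] mult.commute[of _ "D (x - y)"])
    then have "q 1 - q 0 \<ge> D (x - y) * (1 - 0)"
      using convex_on_imp_above_tangent[OF qc, of 0 1 "D (x - y)"] by simp
    then show ?thesis unfolding q_def using DG by simp
  qed
  have FG: "?F G \<le> ereal (G \<bullet> y - f y)"
    unfolding fconj_def
  proof (rule SUP_least)
    fix x show "ereal (G \<bullet> x) - ereal (f x) \<le> ereal (G \<bullet> y - f y)"
      using tangent[of x] by (simp add: inner_diff_right)
  qed
  have Flo: "ereal (u \<bullet> x - f x) \<le> ?F u" for u x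
    unfolding fconj_def by (intro SUP_upper2[of x]) auto
  from am have fin: "ereal (- (y \<bullet> zb)) + ?F zb < \<infinity>"
    and mn: "ereal (- (y \<bullet> zb)) + ?F zb \<le> ereal (- (y \<bullet> G)) + ?F G"
    unfolding is_argmin_def by auto
  obtain r where r: "?F zb = ereal r"
    using fin Flo[of zb y] by (cases "?F zb") auto
  have "ereal (- (y \<bullet> zb) + r) \<le> ereal (- (y \<bullet> G) + (G \<bullet> y - f y))"
    using mn FG r by (metis add_left_mono order_trans plus_ereal.simps(1))
  then have rle: "r \<le> y \<bullet> zb - f y" by (simp add: inner_commute)
  have minq: "f y - zb \<bullet> y \<le> f x - zb \<bullet> x" for x
    using Flo[of zb x] r rle by (simp add: inner_commute)
  have "((\<lambda>x. f x - zb \<bullet> x) has_derivative (\<lambda>d. D d - zb \<bullet> d)) (at y)"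
    using D by (auto intro!: derivative_eq_intros)
  then have "(\<lambda>d. D d - zb \<bullet> d) = (\<lambda>v. 0)"
    using minq by (intro differential_zero_maxmin[of y UNIV]) auto
  then have "D = (\<lambda>d. zb \<bullet> d)" by (metis eq_iff_diff_eq_0)
  then show ?thesis using D grad_eqI by metis
qed

lemma halpha_grad:
  fixes N :: "'a::euclidean_space \<Rightarrow> real" and h w :: "'a \<Rightarrow> ereal"
  assumes norm: "is_norm N"
    and h_proper: "eproper h" and h_convex: "econvex h"
    and w_nonneg: "\<forall>u. w u \<ge> 0"
    and w_strong: "strongly_convex_on_wrt N (edom h) w"
    and w_max: "\<exists>u0\<in>edom h. w u0 < \<infinity> \<and> (\<forall>u\<in>edom h. w u \<le> w u0)"
    and alpha_pos: "\<alpha> > 0"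
    and am: "is_argmin (\<lambda>u. ereal (s \<bullet> u) + halpha h w \<alpha> u) x1"
  shows "grad (\<lambda>u. real_of_ereal (fconj (halpha h w \<alpha>) u)) (- s) = x1"
proof -
  define \<phi> where "\<phi> = halpha h w \<alpha>"
  define H where "H u = real_of_ereal (h u)" for u
  define Wr where "Wr u = real_of_ereal (w u)" for u
  define \<Phi> where "\<Phi> u = H u + \<alpha> * Wr u" for u
  obtain u0 where u0: "w u0 < \<infinity>" "\<forall>u\<in>edom h. w u \<le> w u0" using w_max by blast
  have hninf: "h u \<noteq> -\<infinity>" for u using h_proper unfolding eproper_def by blast
  have hfin: "h u = ereal (H u)" if "u \<in> edom h" for u
    using that hninf[of u] unfolding edom_def H_def by (cases "h u") auto
  have wfin: "w u = ereal (Wr u)" if "u \<in> edom h" for u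
  proof -
    have "w u < \<infinity>" using u0 that by (meson order.strict_trans1)
    then show ?thesis using w_nonneg[rule_format, of u] unfolding Wr_def by (cases "w u") auto
  qed
  have Wnn: "Wr u \<ge> 0" for u using w_nonneg[rule_format, of u] unfolding Wr_def
    by (cases "w u") auto
  have phiD: "\<phi> u = ereal (\<Phi> u)" if "u \<in> edom h" for u
    unfolding \<phi>_def halpha_def \<Phi>_def using hfin[OF that] wfin[OF that] by simp
  have phiN: "\<phi> u = \<infinity>" if "u \<notin> edom h" for u
  proof -
    have "h u = \<infinity>" using that unfolding edom_def by (simp add: top.not_eq_extremum)
    moreover have "ereal \<alpha> * w u \<noteq> -\<infinity>" using w_nonneg[rule_format, of u] alpha_pos
      by (cases "w u") auto
    ultimately show ?thesis unfolding \<phi>_def halpha_def by simp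
  qed
  have dom: "\<phi> u < \<infinity> \<longleftrightarrow> u \<in> edom h" for u
    by (cases "u \<in> edom h") (simp_all add: phiD phiN)
  from am have amin: "ereal (s \<bullet> x1) + \<phi> x1 < \<infinity>" "\<And>u. ereal (s \<bullet> x1) + \<phi> x1 \<le> ereal (s \<bullet> u) + \<phi> u"
    unfolding is_argmin_def \<phi>_def by auto
  have x1D: "x1 \<in> edom h"
    using amin(1) phiN by (rule_tac ccontr) simp
  have amr: "s \<bullet> x1 + \<Phi> x1 \<le> s \<bullet> u + \<Phi> u" if "u \<in> edom h" for u
    using amin(2)[of u] phiD[OF that] phiD[OF x1D] by simp
  obtain c where c: "c > 0" "\<And>v. c * norm v \<le> N v" using norm_lower[OF norm] by blast
  define K where "K = \<alpha> * c\<^sup>2 / 4"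
  have K: "K > 0" unfolding K_def using c alpha_pos by simp
  have grow: "(- s) \<bullet> u - \<Phi> u + K * (norm (u - x1))\<^sup>2 \<le> (- s) \<bullet> x1 - \<Phi> x1" if uD: "u \<in> edom h" for u
  proof -
    define m where "m = (1/2::real) *\<^sub>R u + (1 - 1/2::real) *\<^sub>R x1"
    have hm: "h m \<le> ereal (1/2) * h u + ereal (1 - 1/2) * h x1"
      using h_convex[unfolded econvex_def, rule_format, of "1/2" u x1] unfolding m_def by simp
    then have hm': "h m \<le> ereal (H u / 2 + H x1 / 2)" using hfin[OF uD] hfin[OF x1D] by simp
    then have mD: "m \<in> edom h" unfolding edom_def using le_less_trans[OF hm', of \<infinity>] by simp
    have Hm: "H m \<le> H u / 2 + H x1 / 2" using hm' hfin[OF mD] by simp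
    have wm: "w m \<le> ereal (1/2) * w u + ereal (1 - 1/2) * w x1 - ereal ((1/2) * (1 - 1/2) / 2 * (N (u - x1))\<^sup>2)"
      using w_strong[unfolded strongly_convex_on_wrt_def, rule_format, OF uD x1D, of "1/2"] unfolding m_def by simp
    then have "ereal (Wr m) \<le> ereal (Wr u / 2 + Wr x1 / 2 - (N (u - x1))\<^sup>2 / 8)"
      using wfin[OF uD] wfin[OF x1D] wfin[OF mD] by simp
    then have Wm: "Wr m \<le> Wr u / 2 + Wr x1 / 2 - (N (u - x1))\<^sup>2 / 8" by simp
    have aW: "\<alpha> * Wr m \<le> \<alpha> * (Wr u / 2 + Wr x1 / 2 - (N (u - x1))\<^sup>2 / 8)"
      using Wm alpha_pos by (simp add: mult_left_mono)
    have sm: "s \<bullet> m = s \<bullet> u / 2 + s \<bullet> x1 / 2" unfolding m_def by (simp add: inner_add_right)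
    have am2: "s \<bullet> x1 + \<Phi> x1 \<le> s \<bullet> m + \<Phi> m" by (rule amr[OF mD])
    have Nc: "c * norm (u - x1) \<le> N (u - x1)" by (rule c(2))
    have "(c * norm (u - x1))\<^sup>2 \<le> (N (u - x1))\<^sup>2"
      using Nc c(1) by (intro power_mono) auto
    then have Nsq: "c\<^sup>2 * (norm (u - x1))\<^sup>2 \<le> (N (u - x1))\<^sup>2" by (simp add: power_mult_distrib)
    have "K * (norm (u - x1))\<^sup>2 = \<alpha> / 4 * (c\<^sup>2 * (norm (u - x1))\<^sup>2)" unfolding K_def by simp
    also have "\<dots> \<le> \<alpha> / 4 * (N (u - x1))\<^sup>2" using Nsq alpha_pos by (simp add: mult_left_mono)
    finally have KN: "K * (norm (u - x1))\<^sup>2 \<le> \<alpha> / 4 * (N (u - x1))\<^sup>2" .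
    have "s \<bullet> x1 + \<Phi> x1 + \<alpha> / 4 * (N (u - x1))\<^sup>2 \<le> s \<bullet> u + \<Phi> u"
      using am2 sm Hm aW unfolding \<Phi>_def by (simp add: algebra_simps)
    then show ?thesis using KN by simp
  qed
  have "((\<lambda>p. real_of_ereal (fconj \<phi> p)) has_derivative (\<lambda>d. x1 \<bullet> d)) (at (- s))"
  proof (rule conj_has_derivative[where \<Phi> = \<Phi> and K = K])
    show "\<And>u. \<phi> u < \<infinity> \<Longrightarrow> \<phi> u = ereal (\<Phi> u)" using dom phiD by blast
    show "\<phi> x1 < \<infinity>" using dom x1D by blast
    show "K > 0" by (rule K)
    show "\<And>u. \<phi> u < \<infinity> \<Longrightarrow> - s \<bullet> u - \<Phi> u + K * (norm (u - x1))\<^sup>2 \<le> - s \<bullet> x1 - \<Phi> x1"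
      using dom grow by blast
  qed
  then show ?thesis unfolding \<phi>_def by (rule grad_eqI)
qed


theorem proposition4p1:
  fixes N :: "real^'n \<Rightarrow> real" and f :: "real^'n \<Rightarrow> real"
    and h w :: "real^'n \<Rightarrow> ereal" and L \<alpha> \<eta> :: real
    and x y s zb z v :: "nat \<Rightarrow> real^'n"
  assumes norm: "is_norm N"
    and L_pos: "L > 0"
    and f_convex: "convex_on UNIV f"
    and f_smooth: "L_smooth N L f"
    and h_proper: "eproper h" and h_convex: "econvex h" and h_closed: "eclosed h"
    and h_bdd: "bounded (edom h)"
    and w_nonneg: "\<forall>u. w u \<ge> 0" and w_closed: "eclosed w"
    and w_strong: "strongly_convex_on_wrt N (edom h) w"
    and w_max: "\<exists>u0\<in>edom h. w u0 < \<infinity> \<and> (\<forall>u\<in>edom h. w u \<le> w u0)"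
    and alpha_pos: "\<alpha> > 0"
    and eta_def: "\<eta> = \<alpha> / (L + \<alpha>)"
    and y0: "y 0 \<in> edom h"
    and x_step: "\<forall>k. is_argmin (\<lambda>u. ereal (s k \<bullet> u) + halpha h w \<alpha> u) (x (Suc k))"
    and y_step: "\<forall>k. y (Suc k) = (1 - \<eta>) *\<^sub>R y k + \<eta> *\<^sub>R x (Suc k)"
    and s_step: "\<forall>k. s (Suc k) = (1 - \<eta>) *\<^sub>R s k + \<eta> *\<^sub>R grad f (y k)"
    and z0: "z 0 \<in> edom (fconj (\<lambda>u. ereal (f u)))"
    and zb_step: "\<forall>k. is_argmin (\<lambda>u. ereal (- (v k \<bullet> u)) + fconj (\<lambda>u. ereal (f u)) u) (zb (Suc k))"
    and z_step: "\<forall>k. z (Suc k) = (1 - \<eta>) *\<^sub>R z k + \<eta> *\<^sub>R zb (Suc k)"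
    and v_step: "\<forall>k. v (Suc k) = (1 - \<eta>) *\<^sub>R v k
                   + \<eta> *\<^sub>R grad (\<lambda>u. real_of_ereal (fconj (halpha h w \<alpha>) u)) (- z k)"
    and init: "s 0 = z 0" "v 0 = y 0"
  shows "\<forall>k. y k = v k \<and> s k = z k
           \<and> x (Suc k) = grad (\<lambda>u. real_of_ereal (fconj (halpha h w \<alpha>) u)) (- z k)
           \<and> grad f (y k) = zb (Suc k)"
  proof -
  let ?G = "grad (\<lambda>u. real_of_ereal (fconj (halpha h w \<alpha>) u))"
  have fdiff: "\<And>u. f differentiable at u" using f_smooth unfolding L_smooth_def by blast
  have xk: "x (Suc k) = ?G (- s k)" for k
    using halpha_grad[OF norm h_proper h_convex w_nonneg w_strong w_max alpha_pos x_step[rule_format, of k]]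
    by simp
  have zk: "grad f (y k) = zb (Suc k)" if "y k = v k" for k
    using grad_f_argmax[OF f_convex fdiff, of "y k" "zb (Suc k)"] zb_step[rule_format, of k] that by simp
  have P: "y k = v k \<and> s k = z k" for k
  proof (induction k)
    case 0 then show ?case using init by simp
  next
    case (Suc k)
    then show ?case using xk[of k] zk[of k] y_step s_step z_step v_step by simp
  qed
  show ?thesis using P xk zk by simp
qed

end
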